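(* Let $n\ge 3$ and consider the cycle graph on nodes $1,\dots,n$ with measurements $\widetilde{R}_{12},\widetilde{R}_{23},\dots,\widetilde{R}_{n-1,n},\widetilde{R}_{n1}\in\mathrm{SO}(3)$, and suppose all these measurements lie in a common one-parameter subgroup of $\mathrm{SO}(3)$, i.e. they are all rotations about a common axis. Let $E$ be the cycle error and $E_0,\dots,E_{n-1}$ its $n$-th roots as defined in the context. Then for each $k\in\{0,\dots,n-1\}$, the point $R=(R_1,\dots,R_n)\in\mathrm{SO}(3)^n$ given by $R_1=I_3$ and $$R_i=\Big(\prod_{s=1}^{i-1}\widetilde{R}_{s,s+1}\Big)^{\top}E_k^{\,i-1},\qquad i\in\{2,\dots,n\},$$ (the product taken from left to right, i.e. $\widetilde{R}_{12}\widetilde{R}_{23}\cdots\widetilde{R}_{i-1,i}$) is a stationary point of the problem $\min_{R\in\mathrm{SO}(3)^n} f(R)$.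
   Context: Cycle-graph rotation averaging setup. Let $n\ge 3$. The cycle graph has nodes $1,\dots,n$ and edges $\{i,i+1\}$ for $i=1,\dots,n-1$ together with $\{n,1\}$; write $i\sim j$ if $\{i,j\}$ is an edge. Each edge carries a measured rotation $\widetilde{R}_{ij}\in\mathrm{SO}(3)$, with the convention $\widetilde{R}_{ji}=\widetilde{R}_{ij}^\top$. Define the symmetric $3n\times 3n$ block matrix $\widetilde{R}$ whose $(i,j)$ $3\times3$ block is $I_3$ if $i=j$, $\widetilde{R}_{ij}$ if $i\sim j$, and $0$ otherwise. For $R=(R_1,\dots,R_n)\in\mathrm{SO}(3)^n$, write $R=[R_1^\top\ \cdots\ R_n^\top]^\top\in\mathbb{R}^{3n\times 3}$ and define $f(R):=-\operatorname{Tr}(R^\top\widetilde{R}R)$; the rotation averaging problem is to minimize $f$ over $\mathrm{SO}(3)^n$ (equivalently, maximize $\sum_{i\sim j}\operatorname{Tr}(R_i^\top\widetilde{R}_{ij}R_j)$). The cycle error is $E:=\widetilde{R}_{12}\widetilde{R}_{23}\cdots\widetilde{R}_{n-1,n}\widetilde{R}_{n1}\in\mathrm{SO}(3)$. Write $E=\exp(\gamma[\hat n]_\times)$ with unit axis $\hat n$ and angle $\gamma=\angle(E)\in[-\pi,\pi]$, where $[\hat n]_\times$ is the skew-symmetric cross-product matrix. For $k\in\{0,\dots,n-1\}$, $E_k:=\exp\big((\gamma/n-2k\pi/n)[\hat n]_\times\big)$, so that $E_k^n=E$ and $\angle(E_k)=\gamma/n-2k\pi/n$; $\{E_0,\dots,E_{n-1}\}$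 is the set of $n$-th roots of $E$. *)

theory Defs
  imports "HOL-Analysis.Analysis"
begin

type_synonym mat3 = "real^3^3"

definition SO3 :: "mat3 set" where
  "SO3 = {Q. rotation_matrix Q}"

primrec mpow :: "mat3 \<Rightarrow> nat \<Rightarrow> mat3" where
  "mpow A 0 = mat 1"
| "mpow A (Suc k) = mpow A k ** A"

definition mexp :: "mat3 \<Rightarrow> mat3" where
  "mexp A = (\<Sum>k. (1 / fact k) *\<^sub>R mpow A k)"

(* cross-product (hat) matrix [v]_x, so that [v]_x *v w = v x w *)
definition hat :: "real^3 \<Rightarrow> mat3" where
  "hat v = vector [vector [0, - v$3, v$2],
                   vector [v$3, 0, - v$1],
                   vector [- v$2, v$1, 0]]"

definition cyc_adj :: "nat \<Rightarrow> nat \<Rightarrow> nat \<Rightarrow> bool" where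
  "cyc_adj n i j \<longleftrightarrow> i \<in> {1..n} \<and> j \<in> {1..n} \<and>
     (j = i + 1 \<or> i = j + 1 \<or> (i = n \<and> j = 1) \<or> (i = 1 \<and> j = n))"

(* (i,j) block of the 3n x 3n matrix R-tilde *)
definition Rblk :: "nat \<Rightarrow> (nat \<Rightarrow> nat \<Rightarrow> mat3) \<Rightarrow> nat \<Rightarrow> nat \<Rightarrow> mat3" where
  "Rblk n Rt i j = (if i = j then mat 1 else if cyc_adj n i j then Rt i j else 0)"

(* f(R) = - Tr(R^T Rtilde R), written blockwise *)
definition fobj :: "nat \<Rightarrow> (nat \<Rightarrow> nat \<Rightarrow> mat3) \<Rightarrow> (nat \<Rightarrow> mat3) \<Rightarrow> real" where
  "fobj n Rt R = - (\<Sum>i\<in>{1..n}. \<Sum>j\<in>{1..n}.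
       trace (transpose (R i) ** Rblk n Rt i j ** R j))"

definition stationary :: "nat \<Rightarrow> (nat \<Rightarrow> nat \<Rightarrow> mat3) \<Rightarrow> (nat \<Rightarrow> mat3) \<Rightarrow> bool" where
  "stationary n Rt R \<longleftrightarrow> (\<forall>i\<in>{1..n}. R i \<in> SO3) \<and>
     (\<forall>c :: nat \<Rightarrow> real \<Rightarrow> mat3.
        (\<forall>i\<in>{1..n}. \<forall>t. c i t \<in> SO3) \<longrightarrow>
        (\<forall>i\<in>{1..n}. c i 0 = R i) \<longrightarrow>
        (\<forall>i\<in>{1..n}. c i differentiable (at 0)) \<longrightarrow>
        ((\<lambda>t. fobj n Rt (\<lambda>i. c i t)) has_real_derivative 0) (at 0))"

primrec pathprod :: "(nat \<Rightarrow> nat \<Rightarrow> mat3) \<Rightarrow> nat \<Rightarrow> mat3" where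
  "pathprod Rt 0 = mat 1"
| "pathprod Rt (Suc m) = pathprod Rt m ** Rt (Suc m) (Suc (Suc m))"

definition cycle_err :: "nat \<Rightarrow> (nat \<Rightarrow> nat \<Rightarrow> mat3) \<Rightarrow> mat3" where
  "cycle_err n Rt = pathprod Rt (n - 1) ** Rt n 1"

end

theory Submission
  imports Defs
begin

lemma bb_mm: "bounded_bilinear ((**) :: mat3 \<Rightarrow> mat3 \<Rightarrow> mat3)"
proof -
  have "bilinear ((**) :: mat3 \<Rightarrow> mat3 \<Rightarrow> mat3)"
    unfolding bilinear_def
    by (auto intro!: linearI simp: matrix_add_ldistrib scalar_matrix_assoc matrix_scalar_ac
       matrix_matrix_mult_def vec_eq_iff sum.distrib sum_distrib_left algebra_simps)
  then show ?thesis by (simp add: bilinear_conv_bounded_bilinear)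
qed

lemma bl_tr: "bounded_linear (transpose :: mat3 \<Rightarrow> mat3)"
proof -
  have "linear (transpose :: mat3 \<Rightarrow> mat3)"
    by (auto intro!: linearI simp: transpose_def vec_eq_iff)
  then show ?thesis by (simp add: linear_conv_bounded_linear)
qed

lemma bl_trace: "bounded_linear (trace :: mat3 \<Rightarrow> real)"
proof -
  have "linear (trace :: mat3 \<Rightarrow> real)"
    by (auto intro!: linearI simp: trace_def sum.distrib sum_distrib_left)
  then show ?thesis by (simp add: linear_conv_bounded_linear)
qed

lemma hat_cube:
  assumes "norm a = 1"
  shows "hat a ** hat a ** hat a = - hat a"
proof -
  have "inner a a = 1" using assms by (simp add: norm_eq_1)
  then have h: "a$1*a$1 + a$2*a$2 + a$3*a$3 = 1" by (simp add: inner_vec_def sum_3)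
  show ?thesis
    unfolding vec_eq_iff forall_3 hat_def matrix_matrix_mult_def
    by (simp add: sum_3, (rule conjI)?; algebra?; (insert h; algebra)?) 
qed

lemma hat_tr: "transpose (hat a) = - hat a"
  unfolding vec_eq_iff forall_3 hat_def transpose_def by simp

lemma matrix_add_rdistrib: "((A::mat3) + B) ** C = A ** C + B ** C"
  by (simp add: matrix_matrix_mult_def vec_eq_iff sum.distrib algebra_simps)

lemma neg_mult: "(- (A::mat3)) ** (B::mat3) = - (A ** B)"
  by (rule bounded_bilinear.minus_left[OF bb_mm])

lemma hat_sq_tr: "transpose (hat a ** hat a) = hat a ** hat a"
  unfolding vec_eq_iff forall_3 hat_def transpose_def matrix_matrix_mult_def by (simp add: sum_3 algebra_simps)

definition rod :: "real^3 \<Rightarrow> real \<Rightarrow> mat3" where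
  "rod a x = mat 1 + sin x *\<^sub>R hat a + (1 - cos x) *\<^sub>R (hat a ** hat a)"

lemma rod_mult_gen:
  assumes "norm a = 1"
  shows "(mat 1 + s1 *\<^sub>R hat a + c1 *\<^sub>R (hat a ** hat a)) ** (mat 1 + s2 *\<^sub>R hat a + c2 *\<^sub>R (hat a ** hat a))
     = mat 1 + (s1 + s2 - s1 * c2 - c1 * s2) *\<^sub>R hat a + (c1 + c2 + s1 * s2 - c1 * c2) *\<^sub>R (hat a ** hat a)"
proof -
  let ?K = "hat a"
  have c: "?K ** ?K ** ?K = - ?K" using hat_cube[OF assms] .
  have 1: "?K ** (?K ** ?K) = - ?K" using c by (simp add: matrix_mul_assoc)
  have 2: "(?K ** ?K) ** (?K ** ?K) = - (?K ** ?K)"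
    by (simp only: matrix_mul_assoc c neg_mult)
  show ?thesis
    apply (simp only: matrix_add_ldistrib matrix_add_rdistrib matrix_mul_lid matrix_mul_rid matrix_scalar_ac
       scalar_matrix_assoc[symmetric] matrix_mul_assoc c neg_mult scaleR_add_right scaleR_scaleR scaleR_minus_right)
    apply (simp add: algebra_simps)
    done
qed

lemma rod_mult: assumes "norm a = 1" shows "rod a x ** rod a y = rod a (x + y)"
proof -
  have h1: "sin x + sin y - sin x * (1 - cos y) - (1 - cos x) * sin y = sin (x + y)"
    by (simp add: sin_add algebra_simps)
  have h2: "(1 - cos x) + (1 - cos y) + sin x * sin y - (1 - cos x) * (1 - cos y) = 1 - cos (x + y)"
    by (simp add: cos_add algebra_simps)
  show ?thesis unfolding rod_def rod_mult_gen[OF assms] h1 h2 ..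
qed

lemma rod_0: "rod a 0 = mat 1" by (simp add: rod_def)

lemma transpose_add: "transpose ((A::mat3) + B) = transpose A + transpose B"
  by (simp add: transpose_def vec_eq_iff)

lemma rod_tr: "transpose (rod a x) = rod a (- x)"
  unfolding rod_def transpose_add transpose_scalar hat_tr hat_sq_tr transpose_mat
  by simp



lemma mpow_scale: "mpow (t *\<^sub>R (A::mat3)) k = (t ^ k) *\<^sub>R mpow A k"
  by (induction k) (simp_all add: matrix_scalar_ac scalar_matrix_assoc[symmetric])

lemma mpow_K:
  assumes "norm a = 1"
  shows "mpow (hat a) (2*j+1) = ((-1)^j) *\<^sub>R hat a \<and> mpow (hat a) (2*j+2) = ((-1)^j) *\<^sub>R (hat a ** hat a)"
proof (induction j)
  case 0
  then show ?case by simp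
next
  case (Suc j)
  have c: "hat a ** hat a ** hat a = - hat a" using hat_cube[OF assms] .
  have e1: "2 * Suc j + 1 = Suc (2*j+2)" by simp
  have e2: "2 * Suc j + 2 = Suc (2 * Suc j + 1)" by simp
  have cK: "(hat a ** hat a) ** hat a = - hat a" using c .
  have A: "mpow (hat a) (2 * Suc j + 1) = ((-1)^Suc j) *\<^sub>R hat a"
  proof -
    have "mpow (hat a) (2 * Suc j + 1) = mpow (hat a) (2*j+2) ** hat a"
      unfolding e1 mpow.simps(2) ..
    also have "\<dots> = ((-1)^j) *\<^sub>R ((hat a ** hat a) ** hat a)"
      using Suc.IH by (simp add: scalar_matrix_assoc[symmetric])
    also have "\<dots> = ((-1)^Suc j) *\<^sub>R hat a" unfolding cK by simp
    finally show ?thesis .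
  qed
  moreover have "mpow (hat a) (2 * Suc j + 2) = ((-1)^Suc j) *\<^sub>R (hat a ** hat a)"
  proof -
    have "mpow (hat a) (2 * Suc j + 2) = mpow (hat a) (2 * Suc j + 1) ** hat a"
      unfolding e2 mpow.simps(2) ..
    also have "\<dots> = ((-1)^Suc j) *\<^sub>R (hat a ** hat a)"
      unfolding A by (rule scalar_matrix_assoc[symmetric])
    finally show ?thesis .
  qed
  ultimately show ?case ..
qed

lemma term_form:
  assumes "norm a = 1"
  shows "(1 / fact k) *\<^sub>R mpow (t *\<^sub>R hat a) k =
     (if k = 0 then 1 else 0) *\<^sub>R mat 1 + (sin_coeff k * t ^ k) *\<^sub>R hat a
     + ((if k = 0 then 1 else 0) - cos_coeff k * t ^ k) *\<^sub>R (hat a ** hat a)"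
proof -
  consider "k = 0" | j where "k = 2*j+1" | j where "k = 2*j+2"
    by (metis add_2_eq_Suc' add_Suc_right mult_2 not0_implies_Suc oddE odd_pos old.nat.inject
        One_nat_def add_0 evenE nat.exhaust)
  then show ?thesis
  proof cases
    case 1 then show ?thesis by (simp add: cos_coeff_def)
  next
    case (2 j)
    have "sin_coeff k = (-1)^j / fact k" using 2 by (simp add: sin_coeff_def)
    moreover have "cos_coeff k = 0" using 2 by (simp add: cos_coeff_def)
    moreover have "mpow (hat a) k = ((-1)^j) *\<^sub>R hat a" using 2 mpow_K[OF assms, of j] by simp
    moreover have "k \<noteq> 0" using 2 by simp
    ultimately show ?thesis by (simp add: mpow_scale scaleR_scaleR mult_ac)
  next
    case (3 j)
    have "sin_coeff k = 0" using 3 by (simp add: sin_coeff_def)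
    moreover have "cos_coeff k = (-1)^(j+1) / fact k" using 3 by (simp add: cos_coeff_def)
    moreover have "mpow (hat a) k = ((-1)^j) *\<^sub>R (hat a ** hat a)" using 3 conjunct2[OF mpow_K[OF assms, of j]] by (simp only:)
    moreover have "k \<noteq> 0" using 3 by simp
    ultimately show ?thesis by (simp add: mpow_scale scaleR_scaleR mult_ac)
  qed
qed

lemma mexp_rod:
  assumes "norm a = 1"
  shows "mexp (t *\<^sub>R hat a) = rod a t"
proof -
  have s0: "(\<lambda>k. (if k = 0 then 1 else 0) :: real) sums 1"
    using sums_single[of 0 "\<lambda>_. 1::real"] by (simp add: if_distrib cong: if_cong)
  have s1: "(\<lambda>k. sin_coeff k * t ^ k) sums sin t" using sin_converges[of t] by simp
  have s2: "(\<lambda>k. (if k = 0 then 1 else 0) - cos_coeff k * t ^ k) sums (1 - cos t)"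
    using sums_diff[OF s0 cos_converges[of t]] by simp
  have "(\<lambda>k. (1 / fact k) *\<^sub>R mpow (t *\<^sub>R hat a) k) sums rod a t"
    unfolding term_form[OF assms] rod_def
    by (intro sums_add sums_scaleR_left s0[THEN sums_scaleR_left, simplified] s1 s2)
  then show ?thesis unfolding mexp_def by (simp add: sums_unique[symmetric])
qed

lemma rod_SO3:
  assumes "norm a = 1"
  shows "rod a x \<in> SO3"
proof -
  have o: "orthogonal_matrix (rod a y)" for y
    unfolding orthogonal_matrix rod_tr rod_mult[OF assms] by (simp add: rod_0)
  have "rod a x = rod a (x/2) ** rod a (x/2)" by (simp add: rod_mult[OF assms])
  then have "det (rod a x) = det (rod a (x/2)) ^ 2" by (simp add: det_mul power2_eq_square)
  then have "det (rod a x) \<ge> 0" by simp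
  moreover have "det (rod a x) = 1 \<or> det (rod a x) = -1" using det_orthogonal_matrix[OF o] .
  ultimately have "det (rod a x) = 1" by linarith
  then show ?thesis using o by (simp add: SO3_def rotation_matrix_def)
qed

lemma rod_pow:
  assumes "norm a = 1"
  shows "mpow (rod a x) m = rod a (real m * x)"
  by (induction m) (simp_all add: rod_0 rod_mult[OF assms] algebra_simps)

lemma rod_period:
  "rod a (x - 2 * real k * pi) = rod a x"
proof -
  have "sin (x - 2 * real k * pi) = sin x" "cos (x - 2 * real k * pi) = cos x"
    by (simp_all add: sin_diff cos_diff)
  then show ?thesis by (simp add: rod_def)
qed



lemma trace_sum: "finite A \<Longrightarrow> trace (\<Sum>j\<in>A. (f j :: mat3)) = (\<Sum>j\<in>A. trace (f j))"
  by (induction A rule: finite_induct) (simp_all add: trace_add trace_0[simplified])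

lemma transpose_sum: "finite A \<Longrightarrow> transpose (\<Sum>j\<in>A. (f j :: mat3)) = (\<Sum>j\<in>A. transpose (f j))"
  by (induction A rule: finite_induct) (simp_all add: transpose_add, simp add: transpose_def vec_eq_iff)

lemma sum_mult_left: fixes S :: mat3 shows "(\<Sum>j\<in>A. (f j :: mat3)) ** S = (\<Sum>j\<in>A. f j ** S)"
  by (rule bounded_bilinear.sum_left[OF bb_mm])

lemma sum_mult_right: fixes S :: mat3 shows "S ** (\<Sum>j\<in>A. (f j :: mat3)) = (\<Sum>j\<in>A. S ** f j)"
  by (rule bounded_bilinear.sum_right[OF bb_mm])

lemma trace_neg: "trace (- (A::mat3)) = - trace A"
  by (simp add: trace_def sum_negf)

lemma trace_transpose: "trace (transpose (A::mat3)) = trace A"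
  by (simp add: trace_def transpose_def)

lemma term_deriv:
  fixes f g :: "real \<Rightarrow> mat3"
  assumes "(f has_vector_derivative f') (at 0)" "(g has_vector_derivative g') (at 0)"
  shows "((\<lambda>t. trace (transpose (f t) ** (B::mat3) ** g t)) has_vector_derivative
           trace (transpose (f 0) ** B ** g' + transpose f' ** B ** g 0)) (at 0)"
proof -
  have ft: "((\<lambda>t. transpose (f t)) has_vector_derivative transpose f') (at 0)"
    using bounded_linear.has_vector_derivative[OF bl_tr assms(1)] .
  have fB: "((\<lambda>t. transpose (f t) ** B) has_vector_derivative (transpose (f 0) ** 0 + transpose f' ** B)) (at 0)"
    using bounded_bilinear.has_vector_derivative[OF bb_mm ft has_vector_derivative_const] .
  have "((\<lambda>t. transpose (f t) ** B ** g t) has_vector_derivative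
         (transpose (f 0) ** B ** g' + (transpose (f 0) ** 0 + transpose f' ** B) ** g 0)) (at 0)"
    using bounded_bilinear.has_vector_derivative[OF bb_mm fB assms(2)] .
  then show ?thesis
    using bounded_linear.has_vector_derivative[OF bl_trace] by simp
qed

lemma stat_gen:
  assumes RS: "\<And>i. i \<in> {1..n} \<Longrightarrow> R i \<in> SO3"
    and Bsym: "\<And>i j. i \<in> {1..n} \<Longrightarrow> j \<in> {1..n} \<Longrightarrow> Rblk n Rt j i = transpose (Rblk n Rt i j)"
    and Nsym: "\<And>i. i \<in> {1..n} \<Longrightarrow>
        transpose (\<Sum>j\<in>{1..n}. transpose (R i) ** Rblk n Rt i j ** R j)
         = (\<Sum>j\<in>{1..n}. transpose (R i) ** Rblk n Rt i j ** R j)"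
  shows "stationary n Rt R"
  unfolding stationary_def
proof (intro conjI ballI allI impI)
  fix i assume "i \<in> {1..n}" then show "R i \<in> SO3" by (rule RS)
next
  fix c :: "nat \<Rightarrow> real \<Rightarrow> mat3"
  assume cS: "\<forall>i\<in>{1..n}. \<forall>t. c i t \<in> SO3" and c0: "\<forall>i\<in>{1..n}. c i 0 = R i"
    and cd: "\<forall>i\<in>{1..n}. c i differentiable (at 0)"
  define B where "B = Rblk n Rt"
  define D where "D i = vector_derivative (c i) (at 0)" for i
  define S where "S i = transpose (R i) ** D i" for i
  define M where "M i j = transpose (R i) ** B i j ** R j" for i j
  define N where "N i = (\<Sum>j\<in>{1..n}. M i j)" for i
  let ?I = "{1..n}"
  have hd: "(c i has_vector_derivative D i) (at 0)" if "i \<in> ?I" for i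
    using cd that by (simp add: D_def vector_derivative_works)
  have orth: "transpose (R i) ** R i = mat 1 \<and> R i ** transpose (R i) = mat 1" if "i \<in> ?I" for i
    using RS[OF that] by (simp add: SO3_def rotation_matrix_def orthogonal_matrix_def)
  have DS: "D i = R i ** S i" if "i \<in> ?I" for i
    using orth[OF that] by (simp add: S_def matrix_mul_assoc)
  have skew: "transpose (S i) = - S i" if "i \<in> ?I" for i
  proof -
    have ct: "transpose (c i t) ** c i t = mat 1" for t
      using cS that by (simp add: SO3_def rotation_matrix_def orthogonal_matrix_def)
    have d1: "((\<lambda>t. transpose (c i t) ** c i t) has_vector_derivative
          (transpose (c i 0) ** D i + transpose (D i) ** c i 0)) (at 0)"
      using bounded_bilinear.has_vector_derivative[OF bb_mm
          bounded_linear.has_vector_derivative[OF bl_tr hd[OF that]] hd[OF that]] .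
    have d2: "((\<lambda>t. transpose (c i t) ** c i t) has_vector_derivative 0) (at 0)"
      unfolding ct by simp
    have "transpose (R i) ** D i + transpose (D i) ** R i = 0"
      using vector_derivative_unique_at[OF d1 d2] c0 that by simp
    moreover have "transpose (S i) = transpose (D i) ** R i"
      by (simp add: S_def matrix_transpose_mul)
    ultimately show ?thesis by (simp add: S_def eq_neg_iff_add_eq_0 add.commute)
  qed
  have Msym: "M i j = transpose (M j i)" if "i \<in> ?I" "j \<in> ?I" for i j
    using Bsym[OF that] by (simp add: M_def B_def matrix_transpose_mul matrix_mul_assoc)
  have NS: "transpose (N i) = N i" if "i \<in> ?I" for i
    using Nsym[OF that] by (simp add: N_def M_def B_def)
  have tder: "((\<lambda>t. trace (transpose (c i t) ** B i j ** c j t)) has_vector_derivative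
       (trace (M i j ** S j) - trace (S i ** M i j))) (at 0)" if "i \<in> ?I" "j \<in> ?I" for i j
  proof -
    have e1: "transpose (R i) ** B i j ** (R j ** S j) = M i j ** S j"
      by (simp add: M_def matrix_mul_assoc)
    have e2: "transpose (R i ** S i) ** B i j ** R j = transpose (S i) ** M i j"
      by (simp add: M_def matrix_transpose_mul matrix_mul_assoc)
    have "trace (transpose (c i 0) ** B i j ** D j + transpose (D i) ** B i j ** c j 0)
        = trace (M i j ** S j) + trace (transpose (S i) ** M i j)"
      using c0 that unfolding DS[OF that(1)] DS[OF that(2)] by (simp only: e1 e2 trace_add)
    also have "trace (transpose (S i) ** M i j) = - trace (S i ** M i j)"
      unfolding skew[OF that(1)] neg_mult trace_neg ..
    finally show ?thesis using term_deriv[OF hd[OF that(1)] hd[OF that(2)], of "B i j"] by simp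
  qed
  have fd: "((\<lambda>t. fobj n Rt (\<lambda>i. c i t)) has_vector_derivative
      - (\<Sum>i\<in>?I. \<Sum>j\<in>?I. trace (M i j ** S j) - trace (S i ** M i j))) (at 0)"
    unfolding fobj_def B_def[symmetric]
    by (intro has_vector_derivative_minus has_vector_derivative_sum tder)
  have A1: "(\<Sum>i\<in>?I. \<Sum>j\<in>?I. trace (M i j ** S j)) = (\<Sum>j\<in>?I. trace (N j ** S j))"
  proof -
    have "(\<Sum>i\<in>?I. \<Sum>j\<in>?I. trace (M i j ** S j)) = (\<Sum>j\<in>?I. \<Sum>i\<in>?I. trace (M i j ** S j))"
      by (rule sum.swap)
    also have "\<dots> = (\<Sum>j\<in>?I. trace (transpose (N j) ** S j))"
    proof (rule sum.cong[OF refl])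
      fix j assume j: "j \<in> ?I"
      have "(\<Sum>i\<in>?I. trace (M i j ** S j)) = (\<Sum>i\<in>?I. trace (transpose (M j i) ** S j))"
      proof (rule sum.cong[OF refl])
        fix i assume i: "i \<in> ?I"
        show "trace (M i j ** S j) = trace (transpose (M j i) ** S j)"
          using Msym[OF i j] by (rule arg_cong[where f="\<lambda>X. trace (X ** S j)"])
      qed
      also have "\<dots> = trace (transpose (N j) ** S j)"
        unfolding N_def transpose_sum[OF finite_atLeastAtMost] sum_mult_left trace_sum[OF finite_atLeastAtMost] ..
      finally show "(\<Sum>i\<in>?I. trace (M i j ** S j)) = trace (transpose (N j) ** S j)" .
    qed
    also have "\<dots> = (\<Sum>j\<in>?I. trace (N j ** S j))"
      using NS by (intro sum.cong) auto
    finally show ?thesis .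
  qed
  have A2: "(\<Sum>i\<in>?I. \<Sum>j\<in>?I. trace (S i ** M i j)) = (\<Sum>i\<in>?I. trace (N i ** S i))"
  proof (rule sum.cong[OF refl])
    fix i
    have "(\<Sum>j\<in>?I. trace (S i ** M i j)) = trace (S i ** N i)"
      unfolding N_def sum_mult_right trace_sum[OF finite_atLeastAtMost] ..
    also have "\<dots> = trace (N i ** S i)" by (rule trace_mul_sym)
    finally show "(\<Sum>j\<in>?I. trace (S i ** M i j)) = trace (N i ** S i)" .
  qed
  have "(\<Sum>i\<in>?I. \<Sum>j\<in>?I. trace (M i j ** S j) - trace (S i ** M i j)) = 0"
    using A1 A2 by (simp add: sum_subtractf)
  then show "((\<lambda>t. fobj n Rt (\<lambda>i. c i t)) has_real_derivative 0) (at 0)"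
    using fd by (simp add: has_real_derivative_iff_has_vector_derivative)
qed



lemma SO3_mul: "A \<in> SO3 \<Longrightarrow> B \<in> SO3 \<Longrightarrow> A ** B \<in> SO3"
  by (simp add: SO3_def rotation_matrix_def orthogonal_matrix_mul det_mul)

lemma SO3_tr: "A \<in> SO3 \<Longrightarrow> transpose A \<in> SO3"
  by (auto simp: SO3_def rotation_matrix_def orthogonal_matrix_def)

lemma SO3_orth: "A \<in> SO3 \<Longrightarrow> transpose A ** A = mat 1 \<and> A ** transpose A = mat 1"
  by (simp add: SO3_def rotation_matrix_def orthogonal_matrix_def)

lemma cancel1: "Q ** transpose Q = mat 1 \<Longrightarrow> (A::mat3) ** Q ** transpose Q = A"
  by (metis matrix_mul_assoc matrix_mul_rid)

lemma cancel2: "transpose Q ** Q = mat 1 \<Longrightarrow> (A::mat3) ** transpose Q ** Q = A"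
  by (metis matrix_mul_assoc matrix_mul_rid)

lemma transpose_zero: "transpose (0::mat3) = 0"
  by (simp add: transpose_def vec_eq_iff)

lemma chain:
  fixes P T G F :: mat3
  assumes "P ** transpose P = mat 1" "T ** transpose T = mat 1" "transpose G ** G = mat 1"
  shows "transpose (transpose P ** G) ** T ** (transpose (P ** T) ** (G ** F)) = F"
proof -
  have "transpose (transpose P ** G) ** T ** (transpose (P ** T) ** (G ** F))
      = transpose G ** P ** T ** transpose T ** transpose P ** G ** F"
    by (simp add: matrix_transpose_mul matrix_mul_assoc)
  also have "\<dots> = F" using assms by (simp add: cancel1 cancel2)
  finally show ?thesis .
qed

theorem lemma1:
  fixes n :: nat and Rt :: "nat \<Rightarrow> nat \<Rightarrow> mat3"
    and nhat :: "real^3" and \<gamma> :: real and k :: nat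
  assumes n3: "n \<ge> 3"
    and meas_SO3: "\<And>i j. cyc_adj n i j \<Longrightarrow> Rt i j \<in> SO3"
    and meas_sym: "\<And>i j. cyc_adj n i j \<Longrightarrow> Rt j i = transpose (Rt i j)"
    and common_axis: "\<exists>a::real^3. norm a = 1 \<and>
          (\<forall>i\<in>{1..<n}. \<exists>\<theta>. Rt i (i + 1) = mexp (\<theta> *\<^sub>R hat a)) \<and>
          (\<exists>\<theta>. Rt n 1 = mexp (\<theta> *\<^sub>R hat a))"
    and axis: "norm nhat = 1"
    and angle: "\<gamma> \<in> {-pi..pi}"
    and E_rep: "cycle_err n Rt = mexp (\<gamma> *\<^sub>R hat nhat)"
    and k: "k < n"
  shows "stationary n Rt
           (\<lambda>i. if i = 1 then mat 1
                 else transpose (pathprod Rt (i - 1)) **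
                      mpow (mexp ((\<gamma> / real n - 2 * real k * pi / real n) *\<^sub>R hat nhat)) (i - 1))"
proof -
  define \<theta> where "\<theta> = \<gamma> / real n - 2 * real k * pi / real n"
  define F where "F = rod nhat \<theta>"
  define R where "R i = (if i = 1 then mat 1 else transpose (pathprod Rt (i - 1)) ** mpow F (i - 1))" for i
  define nx where "nx i = (if i = n then 1 else i + 1)" for i :: nat
  define pv where "pv i = (if i = 1 then n else i - 1)" for i :: nat
  let ?I = "{1..n}"
  have goal_eq: "(\<lambda>i. if i = 1 then mat 1
                 else transpose (pathprod Rt (i - 1)) **
                      mpow (mexp ((\<gamma> / real n - 2 * real k * pi / real n) *\<^sub>R hat nhat)) (i - 1)) = R"
    unfolding R_def F_def \<theta>_def mexp_rod[OF axis] ..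
  have FS: "mpow F m \<in> SO3" for m
    unfolding F_def rod_pow[OF axis] by (rule rod_SO3[OF axis])
  have FE: "mpow F n = cycle_err n Rt"
  proof -
    have "real n * \<theta> = \<gamma> - 2 * real k * pi" using n3 by (simp add: \<theta>_def field_simps)
    then show ?thesis unfolding F_def rod_pow[OF axis] E_rep mexp_rod[OF axis]
      by (simp add: rod_period)
  qed
  have adj: "cyc_adj n i j \<longleftrightarrow> i \<in> ?I \<and> j \<in> ?I \<and> (j = nx i \<or> j = pv i)" for i j
    using n3 unfolding cyc_adj_def nx_def pv_def by auto
  have PS: "m \<le> n - 1 \<Longrightarrow> pathprod Rt m \<in> SO3" for m
  proof (induction m)
    case 0 then show ?case by (simp add: SO3_def rotation_matrix_def orthogonal_matrix_id)
  next
    case (Suc m)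
    have "Suc (Suc m) \<le> n" using Suc.prems by arith
    then have "cyc_adj n (Suc m) (Suc (Suc m))" by (simp add: cyc_adj_def)
    then show ?case using Suc by (simp add: SO3_mul meas_SO3)
  qed
  have Rform: "R i = transpose (pathprod Rt (i - 1)) ** mpow F (i - 1)" if "i \<ge> 1" for i
    using that by (simp add: R_def)
  have RS: "R i \<in> SO3" if "i \<in> ?I" for i
  proof -
    have "i - 1 \<le> n - 1" using that by auto
    then show ?thesis using that by (simp add: Rform SO3_mul SO3_tr PS FS)
  qed
  define M where "M i j = transpose (R i) ** Rblk n Rt i j ** R j" for i j
  have Bsym: "Rblk n Rt j i = transpose (Rblk n Rt i j)" if "i \<in> ?I" "j \<in> ?I" for i j
  proof -
    have "cyc_adj n i j \<longleftrightarrow> cyc_adj n j i" unfolding cyc_adj_def by auto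
    then show ?thesis using meas_sym[of i j] by (auto simp: Rblk_def transpose_zero)
  qed
  have Msym: "M i j = transpose (M j i)" if "i \<in> ?I" "j \<in> ?I" for i j
    using Bsym[OF that] by (simp add: M_def matrix_transpose_mul matrix_mul_assoc)
  have nxI: "nx i \<in> ?I" and pvI: "pv i \<in> ?I" if "i \<in> ?I" for i
    using that n3 by (auto simp: nx_def pv_def)
  have dist: "nx i \<noteq> i" "pv i \<noteq> i" "nx i \<noteq> pv i" if "i \<in> ?I" for i
    using that n3 by (auto simp: nx_def pv_def)
  have nxpv: "nx (pv i) = i" if "i \<in> ?I" for i
    using that n3 by (auto simp: nx_def pv_def)
  have Mnx: "M i (nx i) = F" if "i \<in> ?I" for i
  proof (cases "i = n")
    case True
    have a: "cyc_adj n n 1" using n3 by (simp add: cyc_adj_def)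
    have b: "Rblk n Rt n 1 = Rt n 1" using a n3 unfolding Rblk_def by auto
    have r1: "R 1 = mat 1" unfolding R_def by simp
    have "M i (nx i) = transpose (R n) ** Rblk n Rt n 1 ** R 1"
      using True unfolding M_def nx_def by simp
    also have "\<dots> = transpose (R n) ** Rt n 1 ** mat 1" unfolding b r1 ..
    also have "\<dots> = transpose (mpow F (n - 1)) ** (pathprod Rt (n - 1) ** Rt n 1)"
      using n3 by (simp add: Rform matrix_transpose_mul matrix_mul_assoc)
    also have "pathprod Rt (n - 1) ** Rt n 1 = mpow F (Suc (n - 1))"
      using FE n3 by (simp add: cycle_err_def)
    also have "transpose (mpow F (n - 1)) ** mpow F (Suc (n - 1)) = F"
      using SO3_orth[OF FS[of "n-1"]] by (simp add: matrix_mul_assoc)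
    finally show ?thesis .
  next
    case False
    then have i: "1 \<le> i" "i < n" using that by auto
    have a: "cyc_adj n i (i + 1)" using i by (simp add: cyc_adj_def)
    obtain m where m: "i = Suc m" using i by (cases i) auto
    have b: "Rblk n Rt i (i + 1) = Rt i (i + 1)" using a unfolding Rblk_def by auto
    have "M i (nx i) = transpose (R i) ** Rblk n Rt i (i + 1) ** R (i + 1)"
      using False unfolding M_def nx_def by simp
    also have "\<dots> = transpose (R i) ** Rt i (i + 1) ** R (i + 1)" unfolding b ..
    also have "\<dots> = transpose (transpose (pathprod Rt m) ** mpow F m) ** Rt (Suc m) (Suc (Suc m))
         ** (transpose (pathprod Rt m ** Rt (Suc m) (Suc (Suc m))) ** (mpow F m ** F))"
      using m by (simp add: Rform)
    also have "\<dots> = F"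
      apply (rule chain)
      using SO3_orth[OF PS[of m]] SO3_orth[OF meas_SO3[OF a[unfolded m]]] SO3_orth[OF FS[of m]] i m
      by auto
    finally show ?thesis .
  qed
  have Nsym: "transpose (\<Sum>j\<in>?I. M i j) = (\<Sum>j\<in>?I. M i j)" if i: "i \<in> ?I" for i
  proof -
    have z: "M i j = 0" if "j \<in> ?I - {i, nx i, pv i}" for j
    proof -
      have "\<not> cyc_adj n i j" "j \<noteq> i" using that by (auto simp: adj)
      then show ?thesis by (simp add: M_def Rblk_def)
    qed
    have "(\<Sum>j\<in>?I. M i j) = (\<Sum>j\<in>{i, nx i, pv i}. M i j)"
      by (rule sum.mono_neutral_right) (use i nxI pvI z in auto)
    also have "\<dots> = M i i + M i (nx i) + M i (pv i)"
      using dist[OF i] by simp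
    also have "M i i = mat 1"
      using SO3_orth[OF RS[OF i]] by (simp add: M_def Rblk_def)
    also have "M i (pv i) = transpose F"
      using Msym[OF i pvI[OF i]] Mnx[OF pvI[OF i]] nxpv[OF i] by simp
    finally have "(\<Sum>j\<in>?I. M i j) = mat 1 + M i (nx i) + transpose F" .
    then show ?thesis using Mnx[OF i] by (simp add: transpose_add add_ac)
  qed
  have "stationary n Rt R"
  proof (rule stat_gen)
    fix i assume "i \<in> ?I" then show "R i \<in> SO3" by (rule RS)
  next
    fix i j assume "i \<in> ?I" "j \<in> ?I" then show "Rblk n Rt j i = transpose (Rblk n Rt i j)" by (rule Bsym)
  next
    fix i assume i: "i \<in> ?I"
    show "transpose (\<Sum>j\<in>?I. transpose (R i) ** Rblk n Rt i j ** R j) = (\<Sum>j\<in>?I. transpose (R i) ** Rblk n Rt i j ** R j)"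
      using Nsym[OF i] unfolding M_def .
  qed
  then show ?thesis unfolding goal_eq .
qed


end
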